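(* Let $t,d \ge 1$ (possibly depending on $n$) with $td^2 \in o(n/\log n)$. Then $$\log|\mathcal{G}_{t,d}| \;\ge\; (2dt-1)\, n \log n - \big[4n \log d + 2n \log t + 2n \log\log n + n\big]\,dt - 2n - O(\log n).$$
   Context: All logarithms are base 2. A graph $G$ on $n$ vertices has a $d$-dimensional $t$-representation if each vertex $v$ can be assigned a set of at most $t$ pairwise disjoint $d$-dimensional axis-parallel boxes (each box a product $[l_1,r_1]\times\cdots\times[l_d,r_d]$ of closed real intervals) such that two distinct vertices $u,v$ are adjacent if and only if some box assigned to $u$ intersects some box assigned to $v$. $\mathcal{G}_{t,d}$ denotes the class of unlabeled (i.e., up to isomorphism) $n$-vertex graphs that have a $d$-dimensional $t$-representation, and $|\mathcal{G}_{t,d}|$ its cardinality. *)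

theory Defs
  imports Complex_Main "HOL-Library.Landau_Symbols"
begin

definition box_set :: "nat \<Rightarrow> (nat \<Rightarrow> real) \<Rightarrow> (nat \<Rightarrow> real) \<Rightarrow> (nat \<Rightarrow> real) set" where
  "box_set d l r = {x. (\<forall>i<d. l i \<le> x i \<and> x i \<le> r i) \<and> (\<forall>i\<ge>d. x i = 0)}"

definition is_box :: "nat \<Rightarrow> (nat \<Rightarrow> real) set \<Rightarrow> bool" where
  "is_box d S \<longleftrightarrow> (\<exists>l r. (\<forall>i<d. l i \<le> r i) \<and> S = box_set d l r)"

definition graphs_on :: "nat \<Rightarrow> (nat \<times> nat) set set" where
  "graphs_on n = {E. E \<subseteq> {..<n} \<times> {..<n} \<and> sym E \<and> irrefl E}"

definition has_rep :: "nat \<Rightarrow> nat \<Rightarrow> nat \<Rightarrow> (nat \<times> nat) set \<Rightarrow> bool" where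
  "has_rep t d n E \<longleftrightarrow>
     (\<exists>B :: nat \<Rightarrow> (nat \<Rightarrow> real) set set.
        (\<forall>v<n. finite (B v) \<and> card (B v) \<le> t \<and> (\<forall>b\<in>B v. is_box d b) \<and> pairwise disjnt (B v)) \<and>
        (\<forall>u<n. \<forall>v<n. u \<noteq> v \<longrightarrow>
            ((u, v) \<in> E \<longleftrightarrow> (\<exists>b\<in>B u. \<exists>b'\<in>B v. b \<inter> b' \<noteq> {}))))"

definition graph_iso :: "nat \<Rightarrow> (nat \<times> nat) set \<Rightarrow> (nat \<times> nat) set \<Rightarrow> bool" where
  "graph_iso n E E' \<longleftrightarrow>
     (\<exists>f. bij_betw f {..<n} {..<n} \<and> (\<forall>u<n. \<forall>v<n. (u, v) \<in> E \<longleftrightarrow> (f u, f v) \<in> E'))"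

definition rep_graphs :: "nat \<Rightarrow> nat \<Rightarrow> nat \<Rightarrow> (nat \<times> nat) set set" where
  "rep_graphs t d n = {E \<in> graphs_on n. has_rep t d n E}"

definition num_G :: "nat \<Rightarrow> nat \<Rightarrow> nat \<Rightarrow> nat" where
  "num_G t d n = card (rep_graphs t d n //
     {(E, E'). E \<in> rep_graphs t d n \<and> E' \<in> rep_graphs t d n \<and> graph_iso n E E'})"

end

theory Submission
  imports Defs "HOL-Library.FuncSet" "HOL-Combinatorics.Permutations" "HOL-Analysis.Harmonic_Numbers"
begin
lemma box_inter:
  assumes "\<forall>i<d. l i \<le> r i" "\<forall>i<d. l' i \<le> r' i"
  shows "(box_set d l r \<inter> box_set d l' r' \<noteq> {}) \<longleftrightarrow> (\<forall>i<d. l i \<le> r' i \<and> l' i \<le> r i)"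
proof
  assume "box_set d l r \<inter> box_set d l' r' \<noteq> {}"
  then obtain x where "x \<in> box_set d l r" "x \<in> box_set d l' r'" by blast
  then show "\<forall>i<d. l i \<le> r' i \<and> l' i \<le> r i" unfolding box_set_def by force
next
  assume H: "\<forall>i<d. l i \<le> r' i \<and> l' i \<le> r i"
  define x where "x = (\<lambda>i. if i < d then max (l i) (l' i) else 0)"
  have "x \<in> box_set d l r" "x \<in> box_set d l' r'"
    using H assms unfolding box_set_def x_def by auto
  then show "box_set d l r \<inter> box_set d l' r' \<noteq> {}" by blast
qed

lemma box_sep:
  assumes "0 < d" "r 0 < l' 0"
  shows "box_set d l r \<inter> box_set d l' r' = {}"
  using assms unfolding box_set_def by force

lemma is_box_I: "\<forall>i<d. l i \<le> r i \<Longrightarrow> is_box d (box_set d l r)"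
  unfolding is_box_def by blast

definition U :: "nat \<Rightarrow> nat set \<Rightarrow> nat set" where
  "U k C = {p. \<exists>j<k. sorted_list_of_set C ! (2*j) \<le> p \<and> p < sorted_list_of_set C ! (2*j+1)}"

definition par :: "nat set \<Rightarrow> nat \<Rightarrow> bool" where
  "par C p = odd (card {c\<in>C. c \<le> p})"

lemma downclosed_lessThan:
  fixes A :: "nat set"
  assumes "finite A" "\<And>q q'. q \<in> A \<Longrightarrow> q' < q \<Longrightarrow> q' \<in> A"
  shows "A = {..<card A}"
proof (cases "A = {}")
  case True then show ?thesis by simp
next
  case False
  have "A = {..Max A}"
  proof
    show "A \<subseteq> {..Max A}" using assms(1) by auto
    show "{..Max A} \<subseteq> A"
    proof
      fix q assume "q \<in> {..Max A}"
      then have "q \<le> Max A" by simp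
      moreover have "Max A \<in> A" using False assms(1) by simp
      ultimately show "q \<in> A" using assms(2) by (cases "q = Max A") auto
    qed
  qed
  then show ?thesis by (metis card_atMost lessThan_Suc_atMost)
qed

lemma sorted_facts:
  assumes "finite C"
  defines "s \<equiv> sorted_list_of_set C"
  shows "length s = card C" "set s = C" "sorted_wrt (<) s" "distinct s"
    "\<And>i j. i < j \<Longrightarrow> j < card C \<Longrightarrow> s ! i < s ! j"
    "\<And>i. i < card C \<Longrightarrow> s ! i \<in> C"
proof -
  show 1: "length s = card C" "set s = C" "sorted_wrt (<) s" "distinct s"
    using assms by (auto simp: s_def sorted_list_of_set.strict_sorted_key_list_of_set)
  show "\<And>i j. i < j \<Longrightarrow> j < card C \<Longrightarrow> s ! i < s ! j"
    using 1 sorted_wrt_nth_less by metis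
  show "\<And>i. i < card C \<Longrightarrow> s ! i \<in> C"
    using 1 nth_mem by metis
qed

lemma par_U:
  assumes "finite C" "card C = 2*k"
  shows "U k C = {p. par C p}"
proof -
  define s where "s = sorted_list_of_set C"
  note sf = sorted_facts[OF assms(1), folded s_def]
  have "p \<in> U k C \<longleftrightarrow> par C p" for p
  proof -
    define A where "A = {q. q < 2*k \<and> s ! q \<le> p}"
    have finA: "finite A" unfolding A_def by simp
    have "A = {..<card A}"
    proof (rule downclosed_lessThan[OF finA])
      fix q q' assume "q \<in> A" "q' < q"
      then show "q' \<in> A" unfolding A_def using sf(5)[of q' q] assms(2) by force
    qed
    define r where "r = card A"
    have Ar: "\<And>q. q < 2*k \<Longrightarrow> s ! q \<le> p \<longleftrightarrow> q < r"
      using \<open>A = {..<card A}\<close> unfolding r_def A_def by (metis (no_types, lifting) lessThan_iff mem_Collect_eq)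
    have r_le: "r \<le> 2*k"
    proof -
      have "A \<subseteq> {..<2*k}" unfolding A_def by auto
      then show ?thesis unfolding r_def by (metis card_lessThan card_mono finite_lessThan)
    qed
    have img: "{c\<in>C. c \<le> p} = (\<lambda>q. s ! q) ` A"
    proof
      show "{c\<in>C. c \<le> p} \<subseteq> (\<lambda>q. s ! q) ` A"
      proof
        fix c assume "c \<in> {c\<in>C. c \<le> p}"
        then have "c \<in> set s" "c \<le> p" using sf(2) by auto
        then obtain q where "q < length s" "s ! q = c" by (metis in_set_conv_nth)
        then show "c \<in> (\<lambda>q. s ! q) ` A" unfolding A_def using sf(1) assms(2) \<open>c \<le> p\<close> by auto
      qed
      show "(\<lambda>q. s ! q) ` A \<subseteq> {c\<in>C. c \<le> p}"
        unfolding A_def using sf(6) assms(2) by auto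
    qed
    have inj: "inj_on (\<lambda>q. s ! q) A"
      unfolding inj_on_def A_def using sf(4) sf(1) assms(2) nth_eq_iff_index_eq by fastforce
    have cardr: "card {c\<in>C. c \<le> p} = r"
      unfolding img r_def using card_image[OF inj] by simp
    have "p \<in> U k C \<longleftrightarrow> (\<exists>j<k. 2*j < r \<and> \<not> (2*j+1 < r))"
    proof -
      have "p \<in> U k C \<longleftrightarrow> (\<exists>j<k. s ! (2*j) \<le> p \<and> \<not> (s ! (2*j+1) \<le> p))"
        unfolding U_def s_def by auto
      also have "\<dots> \<longleftrightarrow> (\<exists>j<k. 2*j < r \<and> \<not> (2*j+1 < r))"
      proof -
        have "\<And>j. j < k \<Longrightarrow> (s ! (2*j) \<le> p \<longleftrightarrow> 2*j < r) \<and> (s ! (2*j+1) \<le> p \<longleftrightarrow> 2*j+1 < r)"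
          using Ar by auto
        then show ?thesis by blast
      qed
      finally show ?thesis .
    qed
    also have "\<dots> \<longleftrightarrow> odd r"
    proof
      assume "\<exists>j<k. 2*j < r \<and> \<not> (2*j+1 < r)"
      then obtain j where "2*j < r" "\<not> (2*j+1 < r)" by blast
      then have "r = 2*j+1" by simp
      then show "odd r" by simp
    next
      assume "odd r"
      then obtain j where "r = 2*j+1" by (metis oddE)
      then show "\<exists>j<k. 2*j < r \<and> \<not> (2*j+1 < r)" using r_le by (intro exI[of _ j]) auto
    qed
    finally show ?thesis unfolding par_def cardr .
  qed
  then show ?thesis by auto
qed

lemma par_recover:
  assumes "finite C"
  shows "p \<in> C \<longleftrightarrow> (par C p \<noteq> (p > 0 \<and> par C (p - 1)))"
proof -
  have split: "{c\<in>C. c \<le> p} = {c\<in>C. c < p} \<union> ({p} \<inter> C)" by auto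
  have disj: "{c\<in>C. c < p} \<inter> ({p} \<inter> C) = {}" by auto
  have fin: "finite {c\<in>C. c < p}" "finite ({p} \<inter> C)" using assms by auto
  have cs: "card {c\<in>C. c \<le> p} = card {c\<in>C. c < p} + card ({p} \<inter> C)"
    unfolding split using card_Un_disjoint[OF fin disj] .
  have prev: "card {c\<in>C. c < p} = (if p > 0 then card {c\<in>C. c \<le> p - 1} else 0)"
  proof (cases "p > 0")
    case True
    then have "{c\<in>C. c < p} = {c\<in>C. c \<le> p - 1}" by auto
    then show ?thesis using True by simp
  next
    case False then show ?thesis by simp
  qed
  have e1: "par C p = (odd (card {c\<in>C. c < p}) \<noteq> (p \<in> C))"
    unfolding par_def cs by (cases "p \<in> C") auto
  have e2: "odd (card {c\<in>C. c < p}) = (p > 0 \<and> par C (p - 1))"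
    unfolding prev par_def by auto
  show ?thesis using e1 e2 by blast
qed

lemma U_inj:
  assumes "finite C" "finite C'" "card C = 2*k" "card C' = 2*k'" "U k C = U k' C'"
  shows "C = C'"
proof -
  have "par C p = par C' p" for p
  proof -
    have "par C p \<longleftrightarrow> p \<in> U k C" using par_U[OF assms(1,3)] by auto
    also have "\<dots> \<longleftrightarrow> p \<in> U k' C'" using assms(5) by simp
    also have "\<dots> \<longleftrightarrow> par C' p" using par_U[OF assms(2,4)] by auto
    finally show ?thesis .
  qed
  then show ?thesis using par_recover[OF assms(1)] par_recover[OF assms(2)] by blast
qed

lemma U_sub:
  assumes "C \<subseteq> {..<M}" "card C = 2*k"
  shows "U k C \<subseteq> {..<M}"
proof
  fix p assume "p \<in> U k C"
  then obtain j where j: "j < k" "p < sorted_list_of_set C ! (2*j+1)" unfolding U_def by auto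
  have fin: "finite C" using assms(1) finite_subset by blast
  have "sorted_list_of_set C ! (2*j+1) \<in> C" using sorted_facts(6)[OF fin] j assms(2) by simp
  then show "p \<in> {..<M}" using assms(1) j by auto
qed

definition sh :: "bool \<Rightarrow> real \<Rightarrow> nat \<Rightarrow> real" where
  "sh b W i = (if b \<and> i = 0 then 2*W else 0)"

definition slab :: "nat \<Rightarrow> real \<Rightarrow> bool \<Rightarrow> nat \<Rightarrow> nat \<Rightarrow> (nat \<Rightarrow> real) set" where
  "slab d W b i p = box_set d (\<lambda>j. sh b W j + (if j = i then real p else 0))
                                (\<lambda>j. sh b W j + (if j = i then real p else W))"

definition fbox :: "nat \<Rightarrow> real \<Rightarrow> bool \<Rightarrow> (nat \<Rightarrow> nat set) \<Rightarrow> nat \<Rightarrow> (nat \<Rightarrow> real) set" where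
  "fbox d W b C k = box_set d (\<lambda>j. sh b W j + real (sorted_list_of_set (C j) ! (2*k)))
                              (\<lambda>j. sh b W j + real (sorted_list_of_set (C j) ! (2*k+1)) - 1)"

definition okset :: "nat set \<Rightarrow> nat \<Rightarrow> nat \<Rightarrow> bool" where
  "okset C M k \<longleftrightarrow> C \<subseteq> {..<M} \<and> card C = 2*k"

lemma okset_nth:
  assumes "okset C M k" "kk < k"
  shows "sorted_list_of_set C ! (2*kk) < sorted_list_of_set C ! (2*kk+1)"
    "sorted_list_of_set C ! (2*kk+1) < M"
    "\<And>kk'. kk < kk' \<Longrightarrow> kk' < k \<Longrightarrow> sorted_list_of_set C ! (2*kk+1) < sorted_list_of_set C ! (2*kk')"
proof -
  have fin: "finite C" using assms(1) unfolding okset_def using finite_subset by blast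
  have c: "card C = 2*k" using assms(1) unfolding okset_def by simp
  note sf = sorted_facts[OF fin]
  show "sorted_list_of_set C ! (2*kk) < sorted_list_of_set C ! (2*kk+1)"
    using sf(5)[of "2*kk" "2*kk+1"] c assms(2) by simp
  show "sorted_list_of_set C ! (2*kk+1) < M"
    using sf(6)[of "2*kk+1"] c assms okset_def by auto
  show "\<And>kk'. kk < kk' \<Longrightarrow> kk' < k \<Longrightarrow> sorted_list_of_set C ! (2*kk+1) < sorted_list_of_set C ! (2*kk')"
    using sf(5) c by simp
qed

lemma nat_lt_real: "(a::nat) < b \<Longrightarrow> real a + 1 \<le> real b"
  by linarith

lemma slab_is_box:
  assumes "0 \<le> W"
  shows "\<forall>j<d. sh b W j + (if j = i then real p else 0) \<le> sh b W j + (if j = i then real p else W)"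
  using assms by auto

lemma fbox_lr:
  assumes "\<forall>j<d. okset (C j) M k" "kk < k"
  shows "\<forall>j<d. sh b W j + real (sorted_list_of_set (C j) ! (2*kk)) \<le> sh b W j + real (sorted_list_of_set (C j) ! (2*kk+1)) - 1"
proof (intro allI impI)
  fix j assume "j < d"
  then have "sorted_list_of_set (C j) ! (2*kk) < sorted_list_of_set (C j) ! (2*kk+1)"
    using okset_nth(1)[OF _ assms(2)] assms(1) by auto
  then have "real (sorted_list_of_set (C j) ! (2*kk)) + 1 \<le> real (sorted_list_of_set (C j) ! (2*kk+1))"
    by linarith
  then show "sh b W j + real (sorted_list_of_set (C j) ! (2*kk)) \<le> sh b W j + real (sorted_list_of_set (C j) ! (2*kk+1)) - 1"
    by linarith
qed

lemma fbox_is_box: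
  assumes "\<forall>j<d. okset (C j) M k" "kk < k"
  shows "is_box d (fbox d W b C kk)"
  unfolding fbox_def by (rule is_box_I[OF fbox_lr[OF assms]])

lemma slab_box: "0 \<le> W \<Longrightarrow> is_box d (slab d W b i p)"
  unfolding slab_def by (rule is_box_I[OF slab_is_box])

lemma fbox_slab:
  assumes "\<forall>j<d. okset (C j) M k" "kk < k" "real M \<le> W" "i < d" "p < M"
  shows "(fbox d W b C kk \<inter> slab d W b i p \<noteq> {}) \<longleftrightarrow>
     (sorted_list_of_set (C i) ! (2*kk) \<le> p \<and> p < sorted_list_of_set (C i) ! (2*kk+1))"
proof -
  have W0: "0 \<le> W" using assms(3) by simp
  have "(fbox d W b C kk \<inter> slab d W b i p \<noteq> {}) \<longleftrightarrow>
    (\<forall>j<d. sh b W j + real (sorted_list_of_set (C j) ! (2*kk)) \<le> sh b W j + (if j = i then real p else W)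
       \<and> sh b W j + (if j = i then real p else 0) \<le> sh b W j + real (sorted_list_of_set (C j) ! (2*kk+1)) - 1)"
    unfolding fbox_def slab_def by (rule box_inter[OF fbox_lr[OF assms(1,2)] slab_is_box[OF W0]])
  also have "\<dots> \<longleftrightarrow> (sorted_list_of_set (C i) ! (2*kk) \<le> p \<and> p < sorted_list_of_set (C i) ! (2*kk+1))"
  proof
    assume H: "\<forall>j<d. sh b W j + real (sorted_list_of_set (C j) ! (2*kk)) \<le> sh b W j + (if j = i then real p else W)
       \<and> sh b W j + (if j = i then real p else 0) \<le> sh b W j + real (sorted_list_of_set (C j) ! (2*kk+1)) - 1"
    from H[rule_format, OF assms(4)] show "sorted_list_of_set (C i) ! (2*kk) \<le> p \<and> p < sorted_list_of_set (C i) ! (2*kk+1)"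
      by simp
  next
    assume H: "sorted_list_of_set (C i) ! (2*kk) \<le> p \<and> p < sorted_list_of_set (C i) ! (2*kk+1)"
    show "\<forall>j<d. sh b W j + real (sorted_list_of_set (C j) ! (2*kk)) \<le> sh b W j + (if j = i then real p else W)
       \<and> sh b W j + (if j = i then real p else 0) \<le> sh b W j + real (sorted_list_of_set (C j) ! (2*kk+1)) - 1"
    proof (intro allI impI)
      fix j assume j: "j < d"
      have a1: "sorted_list_of_set (C j) ! (2*kk+1) < M" "sorted_list_of_set (C j) ! (2*kk) < sorted_list_of_set (C j) ! (2*kk+1)"
        using okset_nth[OF _ assms(2)] assms(1) j by auto
      then have "real (sorted_list_of_set (C j) ! (2*kk)) \<le> W" using assms(3)
        by (smt (verit) of_nat_less_iff)
      note this
      moreover have "1 \<le> real (sorted_list_of_set (C j) ! (2*kk+1))" using a1 by simp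
      ultimately show "sh b W j + real (sorted_list_of_set (C j) ! (2*kk)) \<le> sh b W j + (if j = i then real p else W)
       \<and> sh b W j + (if j = i then real p else 0) \<le> sh b W j + real (sorted_list_of_set (C j) ! (2*kk+1)) - 1"
      proof (cases "j = i")
        case True
        have "real p + 1 \<le> real (sorted_list_of_set (C j) ! (2*kk+1))" using H True nat_lt_real by simp
        moreover have "real (sorted_list_of_set (C j) ! (2*kk)) \<le> real p" using H True by simp
        ultimately show ?thesis using True by simp
      next
        case False
        then show ?thesis using \<open>real (sorted_list_of_set (C j) ! (2*kk)) \<le> W\<close> \<open>1 \<le> real (sorted_list_of_set (C j) ! (2*kk+1))\<close> by simp
      qed
    qed
  qed
  finally show ?thesis .
qed

lemma area_sep:
  assumes "0 < d" "r 0 \<le> W" "2*W \<le> l' 0" "0 < W"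
  shows "box_set d l r \<inter> box_set d l' r' = {}" "box_set d l' r' \<inter> box_set d l r = {}"
  using box_sep[OF assms(1), of r l'] assms by (auto simp: Int_commute)

lemma fbox_A_sep:
  assumes "0 < d" "\<forall>j<d. okset (C j) M k" "kk < k" "real M \<le> W" "0 < W"
  shows "fbox d W False C kk \<inter> slab d W True i p = {}" "slab d W True i p \<inter> fbox d W False C kk = {}"
    "fbox d W False C kk \<inter> fbox d W True C' kk' = {}"
proof -
  have a1: "sorted_list_of_set (C 0) ! (2*kk+1) < M" using okset_nth(2)[OF _ assms(3)] assms(1,2) by auto
  then have r0: "sh False W 0 + real (sorted_list_of_set (C 0) ! (2*kk+1)) - 1 \<le> W"
    using assms(4) unfolding sh_def by (smt (verit) of_nat_less_iff)
  show "fbox d W False C kk \<inter> slab d W True i p = {}" "slab d W True i p \<inter> fbox d W False C kk = {}"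
    unfolding fbox_def slab_def by (rule area_sep; use assms r0 in \<open>simp add: sh_def\<close>)+
  show "fbox d W False C kk \<inter> fbox d W True C' kk' = {}"
    unfolding fbox_def by (rule area_sep; use assms r0 in \<open>simp add: sh_def\<close>)
qed

lemma slab_A_sep:
  assumes "0 < d" "real p \<le> W" "0 < W"
  shows "slab d W False i p \<inter> slab d W True i' p' = {}"
    "slab d W False i p \<inter> fbox d W True C' kk' = {}"
proof -
  have r0: "sh False W 0 + (if 0 = i then real p else W) \<le> W" using assms unfolding sh_def by auto
  show "slab d W False i p \<inter> slab d W True i' p' = {}"
    unfolding slab_def by (rule area_sep; use assms r0 in \<open>simp add: sh_def\<close>)
  show "slab d W False i p \<inter> fbox d W True C' kk' = {}"
    unfolding slab_def fbox_def by (rule area_sep; use assms r0 in \<open>simp add: sh_def\<close>)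
qed

lemma fbox_disj:
  assumes "0 < d" "\<forall>j<d. okset (C j) M k" "kk < k" "kk' < k" "kk \<noteq> kk'"
  shows "fbox d W b C kk \<inter> fbox d W b C kk' = {}"
proof -
  have "\<And>a a'. a < k \<Longrightarrow> a' < k \<Longrightarrow> a < a' \<Longrightarrow> fbox d W b C a \<inter> fbox d W b C a' = {}"
  proof -
    fix a a' assume h: "a < k" "a' < k" "a < a'"
    have "sorted_list_of_set (C 0) ! (2*a+1) < sorted_list_of_set (C 0) ! (2*a')"
      using okset_nth(3)[OF _ h(1) h(3) h(2)] assms(1,2) by auto
    then have "sh b W 0 + real (sorted_list_of_set (C 0) ! (2*a+1)) - 1 < sh b W 0 + real (sorted_list_of_set (C 0) ! (2*a'))"
      by (smt (verit) of_nat_less_iff)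
    then show "fbox d W b C a \<inter> fbox d W b C a' = {}"
      unfolding fbox_def by (rule box_sep[OF assms(1)])
  qed
  then show ?thesis using assms(3,4,5) by (metis Int_commute linorder_neqE_nat)
qed

definition Wd :: "nat \<Rightarrow> nat \<Rightarrow> real" where "Wd m m2 = real (m + m2 + 1)"

definition Bx :: "nat \<Rightarrow> nat \<Rightarrow> nat \<Rightarrow> nat \<Rightarrow> (nat \<Rightarrow> nat \<Rightarrow> nat set) \<Rightarrow> nat \<Rightarrow> (nat \<Rightarrow> real) set set" where
  "Bx t d m m2 \<phi> v =
    (if v < d*m2 then {slab d (Wd m m2) True (v div m2) (v mod m2)}
     else if v < d*m2 + d*m then
       insert (slab d (Wd m m2) False ((v - d*m2) div m) ((v - d*m2) mod m)) ((fbox d (Wd m m2) True (\<phi> v)) ` {..<t-1})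
     else (fbox d (Wd m m2) False (\<phi> v)) ` {..<t})"

definition Eg :: "nat \<Rightarrow> (nat \<Rightarrow> (nat \<Rightarrow> real) set set) \<Rightarrow> (nat \<times> nat) set" where
  "Eg n B = {(u,v). u < n \<and> v < n \<and> u \<noteq> v \<and> (\<exists>b\<in>B u. \<exists>b'\<in>B v. b \<inter> b' \<noteq> {})}"

definition Kset :: "nat \<Rightarrow> nat \<Rightarrow> nat set set" where
  "Kset M k = {C. C \<subseteq> {..<M} \<and> card C = 2*k}"

definition Params :: "nat \<Rightarrow> nat \<Rightarrow> nat \<Rightarrow> nat \<Rightarrow> nat \<Rightarrow> (nat \<Rightarrow> nat \<Rightarrow> nat set) set" where
  "Params t d m m2 n = PiE {d*m2..<n} (\<lambda>v. PiE {..<d} (\<lambda>i. if v < d*m2 + d*m then Kset m2 (t-1) else Kset m t))"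

lemma Params_ok:
  assumes "\<phi> \<in> Params t d m m2 n" "d*m2 \<le> v" "v < n"
  shows "v < d*m2 + d*m \<Longrightarrow> \<forall>j<d. okset (\<phi> v j) m2 (t-1)"
    "\<not> v < d*m2 + d*m \<Longrightarrow> \<forall>j<d. okset (\<phi> v j) m t"
proof -
  have "\<phi> v \<in> PiE {..<d} (\<lambda>i. if v < d*m2 + d*m then Kset m2 (t-1) else Kset m t)"
    using PiE_mem[OF assms(1)[unfolded Params_def]] assms(2,3) by simp
  then have h: "\<And>j. j < d \<Longrightarrow> \<phi> v j \<in> (if v < d*m2 + d*m then Kset m2 (t-1) else Kset m t)"
    using PiE_mem by fastforce
  show "v < d*m2 + d*m \<Longrightarrow> \<forall>j<d. okset (\<phi> v j) m2 (t-1)"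
    using h unfolding Kset_def okset_def by auto
  show "\<not> v < d*m2 + d*m \<Longrightarrow> \<forall>j<d. okset (\<phi> v j) m t"
    using h unfolding Kset_def okset_def by auto
qed

lemma Wd_pos: "0 < Wd m m2" "real m \<le> Wd m m2" "real m2 \<le> Wd m m2"
  unfolding Wd_def by auto

lemma Eg_iff: "u < n \<Longrightarrow> w < n \<Longrightarrow> u \<noteq> w \<Longrightarrow>
   (u, w) \<in> Eg n B \<longleftrightarrow> (\<exists>b\<in>B u. \<exists>b'\<in>B w. b \<inter> b' \<noteq> {})"
  unfolding Eg_def by simp

lemma Bx_valid:
  assumes P: "\<phi> \<in> Params t d m m2 n" and t: "1 \<le> t" and d: "1 \<le> d" and mm: "d*m2 + d*m \<le> n"
    and m: "1 \<le> m" and m2: "1 \<le> m2" and v: "v < n"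
  shows "finite (Bx t d m m2 \<phi> v)" "card (Bx t d m m2 \<phi> v) \<le> t"
    "\<forall>b\<in>Bx t d m m2 \<phi> v. is_box d b" "pairwise disjnt (Bx t d m m2 \<phi> v)"
proof -
  let ?W = "Wd m m2"
  have W: "0 < ?W" "real m \<le> ?W" "real m2 \<le> ?W" by (rule Wd_pos)+
  have d0: "0 < d" using d by simp
  consider (Z) "v < d*m2" | (Y) "\<not> v < d*m2" "v < d*m2 + d*m" | (X) "\<not> v < d*m2 + d*m" by linarith
  then have "finite (Bx t d m m2 \<phi> v) \<and> card (Bx t d m m2 \<phi> v) \<le> t \<and>
    (\<forall>b\<in>Bx t d m m2 \<phi> v. is_box d b) \<and> pairwise disjnt (Bx t d m m2 \<phi> v)"
  proof cases
    case Z
    then show ?thesis using t W slab_box[of ?W d] unfolding Bx_def by (auto simp: pairwise_def)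
  next
    case Y
    have ok: "\<forall>j<d. okset (\<phi> v j) m2 (t-1)" using Params_ok(1)[OF P _ v] Y by simp
    define s where "s = slab d ?W False ((v - d*m2) div m) ((v - d*m2) mod m)"
    define F where "F = (fbox d ?W True (\<phi> v)) ` {..<t-1}"
    have B: "Bx t d m m2 \<phi> v = insert s F" unfolding Bx_def s_def F_def using Y by simp
    have pm: "real ((v - d*m2) mod m) \<le> ?W"
    proof -
    have "(v - d*m2) mod m < m" using m by simp
    then have "real ((v - d*m2) mod m) \<le> real m" by simp
    then show ?thesis using W(2) by linarith
  qed
    have cF: "card F \<le> t - 1" unfolding F_def using card_image_le[of "{..<t-1}"] by simp
    have fF: "finite F" unfolding F_def by simp
    have "card (insert s F) \<le> Suc (card F)" using fF by (simp add: card_insert_if)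
    then have "card (insert s F) \<le> t" using cF t by linarith
    moreover have "\<forall>b\<in>insert s F. is_box d b"
      using slab_box[of ?W d] fbox_is_box[OF ok] W unfolding s_def F_def by auto
    moreover have "pairwise disjnt (insert s F)"
    proof -
      have "pairwise disjnt F" unfolding F_def pairwise_image
        using fbox_disj[OF d0 ok] by (auto simp: pairwise_def disjnt_def)
      moreover have "\<forall>y\<in>F. disjnt s y \<and> disjnt y s"
        unfolding F_def s_def using slab_A_sep(2)[OF d0 pm W(1)] by (auto simp: disjnt_def Int_commute)
      ultimately show ?thesis by (simp add: pairwise_insert)
    qed
    ultimately show ?thesis unfolding B F_def by simp
  next
    case X
    have ok: "\<forall>j<d. okset (\<phi> v j) m t" using Params_ok(2)[OF P _ v] X mm by simp
    define F where "F = (fbox d ?W False (\<phi> v)) ` {..<t}"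
    have B: "Bx t d m m2 \<phi> v = F" unfolding Bx_def F_def using X by simp
    have "card F \<le> t" unfolding F_def using card_image_le[of "{..<t}"] by simp
    moreover have "\<forall>b\<in>F. is_box d b" using fbox_is_box[OF ok] unfolding F_def by auto
    moreover have "pairwise disjnt F" unfolding F_def pairwise_image
        using fbox_disj[OF d0 ok] by (auto simp: pairwise_def disjnt_def)
    ultimately show ?thesis unfolding B F_def by simp
  qed
  then show "finite (Bx t d m m2 \<phi> v)" "card (Bx t d m m2 \<phi> v) \<le> t"
    "\<forall>b\<in>Bx t d m m2 \<phi> v. is_box d b" "pairwise disjnt (Bx t d m m2 \<phi> v)" by auto
qed

lemma Eg_rep:
  assumes P: "\<phi> \<in> Params t d m m2 n" and t: "1 \<le> t" and d: "1 \<le> d" and mm: "d*m2 + d*m \<le> n"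
    and m: "1 \<le> m" and m2: "1 \<le> m2"
  shows "Eg n (Bx t d m m2 \<phi>) \<in> rep_graphs t d n"
proof -
  have g: "Eg n (Bx t d m m2 \<phi>) \<in> graphs_on n"
    unfolding graphs_on_def Eg_def sym_def irrefl_def by (auto simp: Int_commute)
  have "has_rep t d n (Eg n (Bx t d m m2 \<phi>))"
    unfolding has_rep_def
    apply (rule exI[of _ "Bx t d m m2 \<phi>"])
    using Bx_valid[OF assms] unfolding Eg_def by auto
  then show ?thesis using g unfolding rep_graphs_def by simp
qed

lemma dec_X:
  assumes P: "\<phi> \<in> Params t d m m2 n" and t: "1 \<le> t" and d: "1 \<le> d" and mm: "d*m2 + d*m \<le> n"
    and m: "1 \<le> m" and m2: "1 \<le> m2"
    and u: "d*m2 + d*m \<le> u" "u < n" and i: "i < d" and p: "p < m"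
  shows "(u, d*m2 + i*m + p) \<in> Eg n (Bx t d m m2 \<phi>) \<longleftrightarrow> p \<in> U t (\<phi> u i)"
proof -
  let ?W = "Wd m m2"
  have W: "0 < ?W" "real m \<le> ?W" "real m2 \<le> ?W" by (rule Wd_pos)+
  have d0: "0 < d" using d by simp
  define w where "w = d*m2 + i*m + p"
  have im: "i*m + p < d*m"
  proof -
    have "i*m + p < i*m + m" using p by simp
    also have "\<dots> = (i+1)*m" by simp
    also have "\<dots> \<le> d*m" using i by (intro mult_right_mono) auto
    finally show ?thesis .
  qed
  have w: "w < n" "d*m2 \<le> w" "w < d*m2 + d*m" "w \<noteq> u" using im mm u unfolding w_def by auto
  have wdiv: "(w - d*m2) div m = i" "(w - d*m2) mod m = p" unfolding w_def using p by auto
  have okX: "\<forall>j<d. okset (\<phi> u j) m t" using Params_ok(2)[OF P _ u(2)] u by simp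
  have okY: "\<forall>j<d. okset (\<phi> w j) m2 (t-1)" using Params_ok(1)[OF P w(2) w(1) w(3)] .
  have Bu: "Bx t d m m2 \<phi> u = (fbox d ?W False (\<phi> u)) ` {..<t}" unfolding Bx_def using u by simp
  have Bw: "Bx t d m m2 \<phi> w = insert (slab d ?W False i p) ((fbox d ?W True (\<phi> w)) ` {..<t-1})"
    unfolding Bx_def using w wdiv by simp
  have "(u, w) \<in> Eg n (Bx t d m m2 \<phi>) \<longleftrightarrow>
     (\<exists>kk<t. fbox d ?W False (\<phi> u) kk \<inter> slab d ?W False i p \<noteq> {})"
  proof -
    have "\<And>kk kk'. kk < t \<Longrightarrow> fbox d ?W False (\<phi> u) kk \<inter> fbox d ?W True (\<phi> w) kk' = {}"
      using fbox_A_sep(3)[OF d0 okX _ W(2) W(1)] by blast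
    then show ?thesis unfolding Eg_iff[OF u(2) w(1) w(4)[symmetric]] Bu Bw by blast
  qed
  also have "\<dots> \<longleftrightarrow> (\<exists>kk<t. sorted_list_of_set (\<phi> u i) ! (2*kk) \<le> p \<and> p < sorted_list_of_set (\<phi> u i) ! (2*kk+1))"
    using fbox_slab[OF okX _ W(2) i p] by blast
  also have "\<dots> \<longleftrightarrow> p \<in> U t (\<phi> u i)" unfolding U_def by simp
  finally show ?thesis unfolding w_def .
qed

lemma dec_Y:
  assumes P: "\<phi> \<in> Params t d m m2 n" and t: "1 \<le> t" and d: "1 \<le> d" and mm: "d*m2 + d*m \<le> n"
    and m: "1 \<le> m" and m2: "1 \<le> m2"
    and u: "d*m2 \<le> u" "u < d*m2 + d*m" and i: "i < d" and p: "p < m2"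
  shows "(u, i*m2 + p) \<in> Eg n (Bx t d m m2 \<phi>) \<longleftrightarrow> p \<in> U (t-1) (\<phi> u i)"
proof -
  let ?W = "Wd m m2"
  have W: "0 < ?W" "real m \<le> ?W" "real m2 \<le> ?W" by (rule Wd_pos)+
  have d0: "0 < d" using d by simp
  define w where "w = i*m2 + p"
  have im: "i*m2 + p < d*m2"
  proof -
    have "i*m2 + p < i*m2 + m2" using p by simp
    also have "\<dots> = (i+1)*m2" by simp
    also have "\<dots> \<le> d*m2" using i by (intro mult_right_mono) auto
    finally show ?thesis .
  qed
  have w: "w < n" "w < d*m2" "w \<noteq> u" using im mm u unfolding w_def by auto
  have wdiv: "w div m2 = i" "w mod m2 = p" unfolding w_def using p by auto
  have un: "u < n" using u mm by simp
  have okY: "\<forall>j<d. okset (\<phi> u j) m2 (t-1)" using Params_ok(1)[OF P u(1) un u(2)] .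
  have pm: "real ((u - d*m2) mod m) \<le> ?W"
  proof -
    have "(u - d*m2) mod m < m" using m by simp
    then have "real ((u - d*m2) mod m) \<le> real m" by simp
    then show ?thesis using W(2) by linarith
  qed
  have Bu: "Bx t d m m2 \<phi> u = insert (slab d ?W False ((u - d*m2) div m) ((u - d*m2) mod m)) ((fbox d ?W True (\<phi> u)) ` {..<t-1})"
    unfolding Bx_def using u by simp
  have Bw: "Bx t d m m2 \<phi> w = {slab d ?W True i p}"
    unfolding Bx_def using w wdiv by simp
  have "(u, w) \<in> Eg n (Bx t d m m2 \<phi>) \<longleftrightarrow>
     (\<exists>kk<t-1. fbox d ?W True (\<phi> u) kk \<inter> slab d ?W True i p \<noteq> {})"
  proof -
    have "slab d ?W False ((u - d*m2) div m) ((u - d*m2) mod m) \<inter> slab d ?W True i p = {}"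
      using slab_A_sep(1)[OF d0 pm W(1)] by blast
    then show ?thesis unfolding Eg_iff[OF un w(1) w(3)[symmetric]] Bu Bw by blast
  qed
  also have "\<dots> \<longleftrightarrow> (\<exists>kk<t-1. sorted_list_of_set (\<phi> u i) ! (2*kk) \<le> p \<and> p < sorted_list_of_set (\<phi> u i) ! (2*kk+1))"
    using fbox_slab[OF okY _ W(3) i p] by blast
  also have "\<dots> \<longleftrightarrow> p \<in> U (t-1) (\<phi> u i)" unfolding U_def by simp
  finally show ?thesis unfolding w_def .
qed


lemma Eg_inj:
  assumes t: "1 \<le> t" and d: "1 \<le> d" and mm: "d*m2 + d*m \<le> n" and m: "1 \<le> m" and m2: "1 \<le> m2"
  shows "inj_on (\<lambda>\<phi>. Eg n (Bx t d m m2 \<phi>)) (Params t d m m2 n)"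
proof (rule inj_onI)
  fix \<phi> \<phi>' assume P: "\<phi> \<in> Params t d m m2 n" and P': "\<phi>' \<in> Params t d m m2 n"
    and E: "Eg n (Bx t d m m2 \<phi>) = Eg n (Bx t d m m2 \<phi>')"
  have eq: "\<phi> v i = \<phi>' v i" if v: "d*m2 \<le> v" "v < n" and i: "i < d" for v i
  proof (cases "v < d*m2 + d*m")
    case True
    have ok: "okset (\<phi> v i) m2 (t-1)" "okset (\<phi>' v i) m2 (t-1)"
      using Params_ok(1)[OF P v True] Params_ok(1)[OF P' v True] i by auto
    have "U (t-1) (\<phi> v i) = U (t-1) (\<phi>' v i)"
    proof (intro set_eqI)
      fix p show "p \<in> U (t-1) (\<phi> v i) \<longleftrightarrow> p \<in> U (t-1) (\<phi>' v i)"
      proof (cases "p < m2")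
        case True
        then show ?thesis using dec_Y[OF P t d mm m m2 v(1) \<open>v < d*m2 + d*m\<close> i True]
            dec_Y[OF P' t d mm m m2 v(1) \<open>v < d*m2 + d*m\<close> i True] E by simp
      next
        case False
        then show ?thesis using U_sub[of _ m2 "t-1"] ok unfolding okset_def by blast
      qed
    qed
    then show ?thesis using U_inj[of "\<phi> v i" "\<phi>' v i" "t-1" "t-1"] ok unfolding okset_def
      using finite_subset by blast
  next
    case False
    have ok: "okset (\<phi> v i) m t" "okset (\<phi>' v i) m t"
      using Params_ok(2)[OF P v False] Params_ok(2)[OF P' v False] i by auto
    have u: "d*m2 + d*m \<le> v" using False by simp
    have "U t (\<phi> v i) = U t (\<phi>' v i)"
    proof (intro set_eqI)
      fix p show "p \<in> U t (\<phi> v i) \<longleftrightarrow> p \<in> U t (\<phi>' v i)"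
      proof (cases "p < m")
        case True
        then show ?thesis using dec_X[OF P t d mm m m2 u v(2) i True]
            dec_X[OF P' t d mm m m2 u v(2) i True] E by simp
      next
        case False
        then show ?thesis using U_sub[of _ m t] ok unfolding okset_def by blast
      qed
    qed
    then show ?thesis using U_inj[of "\<phi> v i" "\<phi>' v i" t t] ok unfolding okset_def
      using finite_subset by blast
  qed
  show "\<phi> = \<phi>'"
  proof (rule PiE_ext[OF P[unfolded Params_def] P'[unfolded Params_def]])
    fix v assume v: "v \<in> {d*m2..<n}"
    show "\<phi> v = \<phi>' v"
      by (rule PiE_ext[OF PiE_mem[OF P[unfolded Params_def] v] PiE_mem[OF P'[unfolded Params_def] v]])
        (use eq v in auto)
  qed
qed

lemma card_Kset: "card (Kset M k) = M choose (2*k)"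
  unfolding Kset_def using n_subsets[of "{..<M}" "2*k"] by simp

lemma card_Params:
  assumes mm: "d*m2 + d*m \<le> n"
  shows "card (Params t d m m2 n) = (m2 choose (2*(t-1)))^(d*(d*m)) * (m choose (2*t))^(d*(n - (d*m2 + d*m)))"
proof -
  let ?f = "\<lambda>v. card (PiE {..<d} (\<lambda>i. if v < d*m2 + d*m then Kset m2 (t-1) else Kset m t))"
  have c: "card (Params t d m m2 n) = (\<Prod>v\<in>{d*m2..<n}. ?f v)"
    unfolding Params_def by (rule card_PiE) simp
  have f: "?f v = (if v < d*m2 + d*m then (m2 choose (2*(t-1)))^d else (m choose (2*t))^d)" for v
    by (simp add: card_PiE card_Kset)
  have split: "{d*m2..<n} = {d*m2..<d*m2 + d*m} \<union> {d*m2 + d*m..<n}" using mm by auto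
  have "(\<Prod>v\<in>{d*m2..<n}. ?f v) = (\<Prod>v\<in>{d*m2..<d*m2 + d*m}. ?f v) * (\<Prod>v\<in>{d*m2 + d*m..<n}. ?f v)"
    unfolding split by (rule prod.union_disjoint) auto
  also have "(\<Prod>v\<in>{d*m2..<d*m2 + d*m}. ?f v) = (\<Prod>v\<in>{d*m2..<d*m2 + d*m}. (m2 choose (2*(t-1)))^d)"
    by (rule prod.cong) (auto simp: card_PiE card_Kset)
  also have "(\<Prod>v\<in>{d*m2 + d*m..<n}. ?f v) = (\<Prod>v\<in>{d*m2 + d*m..<n}. (m choose (2*t))^d)"
    by (rule prod.cong) (auto simp: card_PiE card_Kset)
  finally show ?thesis unfolding c by (simp add: power_mult[symmetric] mult.commute)
qed

lemma rep_graphs_finite: "finite (rep_graphs t d n)"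
proof -
  have "rep_graphs t d n \<subseteq> Pow ({..<n} \<times> {..<n})"
    unfolding rep_graphs_def graphs_on_def by auto
  then show ?thesis by (rule finite_subset) simp
qed

lemma card_rep_ge:
  assumes t: "1 \<le> t" and d: "1 \<le> d" and mm: "d*m2 + d*m \<le> n" and m: "1 \<le> m" and m2: "1 \<le> m2"
  shows "card (Params t d m m2 n) \<le> card (rep_graphs t d n)"
proof -
  have "card (Params t d m m2 n) = card ((\<lambda>\<phi>. Eg n (Bx t d m m2 \<phi>)) ` Params t d m m2 n)"
    using card_image[OF Eg_inj[OF assms]] by simp
  also have "\<dots> \<le> card (rep_graphs t d n)"
    by (rule card_mono[OF rep_graphs_finite]) (use Eg_rep[OF _ assms] in auto)
  finally show ?thesis .
qed

lemma class_bound: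
  assumes R: "R \<subseteq> graphs_on n" and E: "E \<in> R"
  defines "rel \<equiv> {(E, E'). E \<in> R \<and> E' \<in> R \<and> graph_iso n E E'}"
  shows "card (rel `` {E}) \<le> fact n"
proof -
  let ?P = "{f. f permutes {..<n}}"
  have sub: "rel `` {E} \<subseteq> (\<lambda>f. map_prod f f ` E) ` ?P"
  proof
    fix E' assume "E' \<in> rel `` {E}"
    then have E': "E' \<in> R" "graph_iso n E E'" unfolding rel_def by auto
    then obtain f where f: "bij_betw f {..<n} {..<n}" "\<forall>u<n. \<forall>v<n. (u, v) \<in> E \<longleftrightarrow> (f u, f v) \<in> E'"
      unfolding graph_iso_def by blast
    define g where "g = (\<lambda>x. if x < n then f x else x)"
    have bg: "bij_betw g {..<n} {..<n}" using f(1) unfolding g_def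
      by (rule bij_betw_cong[THEN iffD1, rotated]) auto
    have gp: "g permutes {..<n}" by (rule bij_imp_permutes[OF bg]) (auto simp: g_def)
    have Esub: "E \<subseteq> {..<n} \<times> {..<n}" "E' \<subseteq> {..<n} \<times> {..<n}"
      using R E E'(1) unfolding graphs_on_def by auto
    have "E' = map_prod g g ` E"
    proof
      show "E' \<subseteq> map_prod g g ` E"
      proof
        fix z assume z: "z \<in> E'"
        obtain x y where xy: "z = (x, y)" by (cases z)
        have xy': "x < n" "y < n" using Esub(2) z xy by auto
        obtain u where u: "u < n" "f u = x" using f(1) xy'(1) unfolding bij_betw_def by (metis imageE lessThan_iff)
        obtain v where v: "v < n" "f v = y" using f(1) xy'(2) unfolding bij_betw_def by (metis imageE lessThan_iff)
        have "(u, v) \<in> E" using f(2) u v z xy by auto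
        moreover have "map_prod g g (u, v) = z" using u v xy unfolding g_def by simp
        ultimately show "z \<in> map_prod g g ` E" by force
      qed
      show "map_prod g g ` E \<subseteq> E'"
      proof
        fix z assume "z \<in> map_prod g g ` E"
        then obtain u v where uv: "(u, v) \<in> E" "z = (g u, g v)" by auto
        have "u < n" "v < n" using Esub(1) uv(1) by auto
        then show "z \<in> E'" using f(2) uv unfolding g_def by auto
      qed
    qed
    then show "E' \<in> (\<lambda>f. map_prod f f ` E) ` ?P" using gp by blast
  qed
  have "card (rel `` {E}) \<le> card ((\<lambda>f. map_prod f f ` E) ` ?P)"
    by (rule card_mono[OF _ sub]) (simp add: finite_permutations)
  also have "\<dots> \<le> card ?P" by (rule card_image_le) (simp add: finite_permutations)
  also have "\<dots> = fact n" by (rule card_permutations) auto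
  finally show ?thesis .
qed

lemma card_rep_le: "card (rep_graphs t d n) \<le> fact n * num_G t d n"
proof -
  let ?R = "rep_graphs t d n"
  let ?rel = "{(E, E'). E \<in> ?R \<and> E' \<in> ?R \<and> graph_iso n E E'}"
  have Rg: "?R \<subseteq> graphs_on n" unfolding rep_graphs_def by auto
  have refl: "E \<in> ?rel `` {E}" if "E \<in> ?R" for E
  proof -
    have "graph_iso n E E" unfolding graph_iso_def by (rule exI[of _ id]) auto
    then show ?thesis using that by auto
  qed
  have U: "?R = \<Union> (?R // ?rel)"
  proof
    show "?R \<subseteq> \<Union> (?R // ?rel)" using refl unfolding quotient_def by blast
    show "\<Union> (?R // ?rel) \<subseteq> ?R" unfolding quotient_def by auto
  qed
  have "card ?R \<le> sum card (?R // ?rel)" by (subst U) (rule card_Union_le_sum_card)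
  also have "\<dots> \<le> of_nat (card (?R // ?rel)) * fact n"
  proof (rule sum_bounded_above)
    fix Q assume "Q \<in> ?R // ?rel"
    then obtain E where E: "E \<in> ?R" "Q = ?rel `` {E}" unfolding quotient_def by blast
    show "card Q \<le> fact n" unfolding E(2) by (rule class_bound[OF Rg E(1)])
  qed
  finally show ?thesis unfolding num_G_def by (simp add: mult.commute)
qed


lemma final_alg:
  fixes N D T L lam lD lT lL X y z LC1 LC2 LF ka :: real
  assumes N: "N > 0" and D: "D \<ge> 1" and T: "T \<ge> 1" and L: "L \<ge> 128"
    and lD: "lD \<ge> 0" and lT: "lT \<ge> 0" and lL: "lL \<ge> 0" and lam: "(36/25) \<le> lam" "lam \<le> (3/2)"
    and ka: "-(1/10) \<le> ka" "ka \<le> 0" and lT2: "1 + lT \<le> T"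
    and X: "X = N - y - z" "X \<ge> 0" and y: "0 \<le> y" "y \<le> N / L" and z: "0 \<le> z" "z \<le> N / (4*L)"
    and LC1: "LC1 \<ge> 2*T*(L - lD - lL + ka) - (2*T*(1 + lT) - 2*T*lam + (1 + lT) + lam)"
    and LC2: "LC2 \<ge> (2*T - 2)*(L - lD - lL - 3 - (1 + lT))"
    and LF: "LF \<le> N*L - N*lam + L + lam"
    and Dc: "2*D*lD \<ge> (7/2)*(D - 1)"
  shows "D*X*LC1 + D*y*LC2 - LF \<ge> (2*D*T - 1)*N*L - (4*N*lD + 2*N*lT + 2*N*lL + N)*D*T - 2*N - 2*L"
proof -
  define lc1 where "lc1 = 2*T*(L - lD - lL + ka) - (2*T*(1 + lT) - 2*T*lam + (1 + lT) + lam)"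
  define lc2 where "lc2 = (2*T - 2)*(L - lD - lL - 3 - (1 + lT))"
  define tau where "tau = 2*T*L - T*(4*lD + 2*lT + 2*lL + 1)"
  define f where "f = T*(2*lam - 1 + 2*ka) - (1 + lT) - lam"
  have DX: "D*X \<ge> 0" using D X by simp
  have Dy: "D*y \<ge> 0" using D y by simp
  have s1: "D*X*LC1 \<ge> D*X*lc1" using mult_left_mono[OF LC1 DX] unfolding lc1_def by simp
  have s2: "D*y*LC2 \<ge> D*y*lc2" using mult_left_mono[OF LC2 Dy] unfolding lc2_def by simp
  have Nsum: "N = X + y + z" using X by simp
  have e1: "lc1 - tau = 2*T*lD + f" unfolding lc1_def tau_def f_def by (simp add: algebra_simps)
  have e2: "lc2 - tau \<ge> 2*T*lD - 2*L - 8*T"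
  proof -
    have "lc2 - tau = -2*L + (2*T+2)*lD + 2*lL + 2*lT - 7*T + 8"
      unfolding lc2_def tau_def by (simp add: algebra_simps)
    moreover have "(2*T+2)*lD \<ge> 2*T*lD" using lD by (simp add: algebra_simps)
    ultimately show ?thesis using lL lT T by linarith
  qed
  have e3: "- tau \<ge> 2*T*lD - 2*T*L"
  proof -
    have "- tau = -2*T*L + 4*T*lD + 2*T*lT + 2*T*lL + T" unfolding tau_def by (simp add: algebra_simps)
    moreover have "4*T*lD \<ge> 2*T*lD" "2*T*lT \<ge> 0" "2*T*lL \<ge> 0" using lD lT lL T by auto
    ultimately show ?thesis using T by linarith
  qed
  have key: "X*(lc1 - tau) + y*(lc2 - tau) + z*(-tau) \<ge> 2*T*lD*N + X*f - y*(2*L + 8*T) - 2*T*L*z"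
  proof -
    have "y*(lc2 - tau) \<ge> y*(2*T*lD - 2*L - 8*T)" using mult_left_mono[OF e2 y(1)] .
    moreover have "z*(-tau) \<ge> z*(2*T*lD - 2*T*L)" using mult_left_mono[OF e3 z(1)] .
    moreover have "X*(lc1 - tau) = X*(2*T*lD) + X*f" unfolding e1 by (simp add: algebra_simps)
    moreover have "2*T*lD*N = X*(2*T*lD) + y*(2*T*lD) + z*(2*T*lD)" unfolding Nsum by (simp add: algebra_simps)
    ultimately show ?thesis by (simp add: algebra_simps)
  qed
  have fle: "f \<le> 3*T"
  proof -
    have "2*lam - 1 + 2*ka \<le> 2" using lam ka by simp
    then have "T*(2*lam - 1 + 2*ka) \<le> T*2" using T by (intro mult_left_mono) auto
    then show ?thesis unfolding f_def using lam lT T by linarith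
  qed
  have Xf: "X*f \<ge> N*f - (y+z)*(3*T)"
  proof -
    have "X*f = N*f - (y+z)*f" unfolding Nsum by (simp add: algebra_simps)
    moreover have "(y+z)*f \<le> (y+z)*(3*T)" using mult_left_mono[OF fle] y z by simp
    ultimately show ?thesis by linarith
  qed
  have Lpos: "L > 0" using L by simp
  have yz3: "(y+z)*(3*T) \<le> (15/4)*T*N/L"
  proof -
    have "y + z \<le> N/L + N/(4*L)" using y z by simp
    also have "\<dots> = (5/4)*(N/L)" by (simp add: field_simps)
    finally have "(y+z)*(3*T) \<le> (5/4)*(N/L)*(3*T)" using T by (intro mult_right_mono) auto
    then show ?thesis by (simp add: field_simps)
  qed
  have y2: "y*(2*L + 8*T) \<le> 2*N + 8*T*N/L"
  proof -
    have "y*(2*L + 8*T) \<le> (N/L)*(2*L + 8*T)" using y Lpos T by (intro mult_right_mono) auto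
    also have "\<dots> = 2*N + 8*T*N/L" using Lpos by (simp add: field_simps)
    finally show ?thesis .
  qed
  have z2: "2*T*L*z \<le> T*N/2"
  proof -
    have "2*T*L*z \<le> 2*T*L*(N/(4*L))" using z T Lpos by (intro mult_left_mono) auto
    also have "\<dots> = T*N/2" using Lpos by (simp add: field_simps)
    finally show ?thesis .
  qed
  have TNL: "T*N/L \<le> T*N/128"
    using L N T by (intro divide_left_mono) (auto intro!: mult_pos_pos)
  have fbound: "f - T*(1/2 + 47/(4*128)) \<ge> - lam"
  proof -
    have "2*lam - 1 + 2*ka - (1/2 + 47/(4*128)) \<ge> 1" using lam ka by simp
    then have "T*(2*lam - 1 + 2*ka - (1/2 + 47/(4*128))) \<ge> T*1" using T by (intro mult_left_mono) auto
    then show ?thesis unfolding f_def using lT2 by (simp add: algebra_simps)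
  qed
  have brk: "2*T*lD*N + X*f - y*(2*L + 8*T) - 2*T*L*z \<ge> N*(2*T*lD - lam - 2)"
  proof -
    have eq47: "(15/4)*T*N/L + 8*T*N/L = (47/4)*(T*N/L)" by (simp add: field_simps)
    have "2*T*lD*N + X*f - y*(2*L + 8*T) - 2*T*L*z
       \<ge> 2*T*lD*N + N*f - (47/4)*(T*N/L) - 2*N - T*N/2"
      using Xf yz3 y2 z2 eq47 by linarith
    moreover have "(47/4)*(T*N/L) \<le> (47/4)*(T*N/128)" using TNL by (intro mult_left_mono) auto
    moreover have "N*(f - T*(1/2 + 47/(4*128))) \<ge> N*(-lam)" using mult_left_mono[OF fbound] N by simp
    moreover have "N*(f - T*(1/2 + 47/(4*128))) = N*f - T*N/2 - (47/4)*(T*N/128)" by (simp add: algebra_simps)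
    moreover have "N*(2*T*lD - lam - 2) = 2*T*lD*N - N*lam - 2*N" by (simp add: algebra_simps)
    moreover have "N*(-lam) = - (N*lam)" by simp
    ultimately show ?thesis by linarith
  qed
  have main: "D*X*lc1 + D*y*lc2 - (X + y + z)*(D*tau) \<ge> D*(N*(2*T*lD - lam - 2))"
  proof -
    have "D*X*lc1 + D*y*lc2 - (X + y + z)*(D*tau) = D*(X*(lc1 - tau) + y*(lc2 - tau) + z*(-tau))"
      by (simp add: algebra_simps)
    also have "\<dots> \<ge> D*(N*(2*T*lD - lam - 2))"
      using key brk D by (intro mult_left_mono) auto
    finally show ?thesis .
  qed
  have fin: "D*(N*(2*T*lD - lam - 2)) + 2*N + N*lam \<ge> 0"
  proof -
    have "D*(N*(2*T*lD - lam - 2)) + 2*N + N*lam = N*(2*D*T*lD - (D - 1)*(lam + 2))"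
      by (simp add: algebra_simps)
    moreover have "2*D*T*lD \<ge> 2*D*lD" using T D lD by (simp add: mult_left_mono mult_right_mono)
    moreover have "(D - 1)*(lam + 2) \<le> (D - 1)*(7/2)" using D lam by (intro mult_left_mono) auto
    moreover have "2*D*T*lD - (D - 1)*(lam + 2) \<ge> 0" using calculation(2,3) Dc by linarith
    ultimately show ?thesis using N by simp
  qed
  have goal_eq: "(2*D*T - 1)*N*L - (4*N*lD + 2*N*lT + 2*N*lL + N)*D*T - 2*N - 2*L
      = N*(D*tau) - N*L - 2*N - 2*L"
    unfolding tau_def by (simp add: algebra_simps)
  show ?thesis
  proof -
    have main': "D*X*lc1 + D*y*lc2 - N*(D*tau) \<ge> D*(N*(2*T*lD - lam - 2))" using main Nsum by simp
    show ?thesis unfolding goal_eq using s1 s2 main' fin LF lam L by linarith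
  qed
qed


lemma ln_ge_1_minus_inv: "0 < x \<Longrightarrow> 1 - 1/x \<le> ln (x::real)"
proof -
  assume x: "0 < x"
  have "ln (1/x) \<le> 1/x - 1" using ln_le_minus_one[of "1/x"] x by simp
  then show ?thesis using x by (simp add: ln_div)
qed

lemma ln_fact_bound:
  assumes "1 \<le> k"
  shows "ln (fact k :: real) \<le> real k * ln (real k) - real k + ln (real k) + 1"
  using assms
proof (induction k rule: dec_induct)
  case base then show ?case by simp
next
  case (step k)
  have k: "real k \<ge> 1" using step(1) by simp
  have IH: "ln (fact k :: real) \<le> real k * ln (real k) - real k + ln (real k) + 1" using step(3) .
  have f: "ln (fact (Suc k) :: real) = ln (real (Suc k)) + ln (fact k)"
    by (simp add: ln_mult fact_gt_zero del: of_nat_Suc)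
  have key: "(real k + 1) * (ln (real k + 1) - ln (real k)) \<ge> 1"
  proof -
    have "ln ((real k + 1) / real k) \<ge> 1 - 1/((real k + 1)/real k)"
      by (rule ln_ge_1_minus_inv) (use k in simp)
    moreover have "1 - 1/((real k + 1)/real k) = 1/(real k + 1)" using k by (simp add: field_simps)
    moreover have "ln ((real k + 1) / real k) = ln (real k + 1) - ln (real k)" using k by (simp add: ln_div)
    ultimately have "ln (real k + 1) - ln (real k) \<ge> 1/(real k + 1)" by simp
    then have "(real k + 1) * (ln (real k + 1) - ln (real k)) \<ge> (real k + 1) * (1/(real k + 1))"
      using k by (intro mult_left_mono) auto
    then show ?thesis using k by simp
  qed
  have "ln (fact (Suc k) :: real) \<le> ln (real k + 1) + real k * ln (real k) - real k + ln (real k) + 1"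
  proof -
    have "ln (real (Suc k)) = ln (real k + 1)" by simp
    then show ?thesis using f IH by linarith
  qed
  also have "\<dots> \<le> (real k + 1) * ln (real k + 1) - (real k + 1) + ln (real k + 1) + 1"
    using key by (simp add: algebra_simps)
  also have "\<dots> = real (Suc k) * ln (real (Suc k)) - real (Suc k) + ln (real (Suc k)) + 1" by (simp add: add.commute)
  finally show ?case .
qed

lemma log2_fact_bound:
  assumes "1 \<le> k"
  shows "log 2 (fact k :: real) \<le> real k * log 2 (real k) - real k * (1 / ln 2) + log 2 (real k) + 1 / ln 2"
proof -
  have "log 2 (fact k :: real) = ln (fact k) / ln 2" by (simp add: log_def)
  also have "\<dots> \<le> (real k * ln (real k) - real k + ln (real k) + 1) / ln 2"
    by (rule divide_right_mono[OF ln_fact_bound[OF assms]]) simp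
  also have "\<dots> = real k * log 2 (real k) - real k * (1 / ln 2) + log 2 (real k) + 1 / ln 2"
    by (simp add: log_def field_simps)
  finally show ?thesis .
qed

lemma fact_ge_pow:
  "k \<le> M \<Longrightarrow> fact (M - k) * (M - k + 1) ^ k \<le> (fact M :: nat)"
proof (induction k)
  case 0 then show ?case by simp
next
  case (Suc k)
  have IH: "fact (M - k) * (M - k + 1) ^ k \<le> (fact M :: nat)" using Suc by simp
  define j where "j = M - Suc k"
  have e: "M - k = Suc j" using Suc(2) unfolding j_def by simp
  have "fact (M - Suc k) * (M - Suc k + 1) ^ Suc k = fact j * Suc j * Suc j ^ k"
    unfolding j_def[symmetric] by (simp add: algebra_simps)
  also have "\<dots> \<le> fact j * Suc j * (Suc j + 1) ^ k"
    by (intro mult_left_mono power_mono) auto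
  also have "fact j * Suc j = fact (M - k)"
    unfolding e by (simp add: algebra_simps)
  also have "Suc j + 1 = M - k + 1" using e by simp
  finally show ?case using IH by simp
qed

lemma binom_lower:
  assumes "k \<le> M"
  shows "((M - k + 1) ^ k :: nat) \<le> (M choose k) * fact k"
proof -
  have "fact k * fact (M - k) * (M choose k) = fact M" by (rule binomial_fact_lemma[OF assms])
  then have "fact (M - k) * (M - k + 1) ^ k \<le> fact (M - k) * ((M choose k) * fact k)"
    using fact_ge_pow[OF assms] by (simp add: algebra_simps)
  then show ?thesis by (simp add: fact_gt_zero)
qed


lemma two_t_le: "1 \<le> t \<Longrightarrow> 2 * t \<le> (2::nat) ^ t"
proof (induction t rule: dec_induct)
  case base then show ?case by simp
next
  case (step t) then show ?case by simp
qed

lemma lT2: assumes "1 \<le> t" shows "1 + log 2 (real t) \<le> real t"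
proof -
  have "real (2 * t) \<le> real ((2::nat) ^ t)" using two_t_le[OF assms] by (simp only: of_nat_le_iff)
  then have "2 * real t \<le> 2 powr real t" by (simp add: powr_realpow)
  then have "log 2 (2 * real t) \<le> log 2 (2 powr real t)"
    using assms by (subst log_le_cancel_iff) auto
  moreover have "log 2 (2 * real t) = 1 + log 2 (real t)" using assms by (simp add: log_mult)
  ultimately show ?thesis by simp
qed

lemma Dcase: assumes "1 \<le> d" shows "2 * real d * log 2 (real d) \<ge> (7/2) * (real d - 1)"
proof -
  consider "d = 1" | "d = 2" | "d = 3" | "4 \<le> d" using assms by linarith
  then show ?thesis
  proof cases
    case 3
    have "log 2 (8::real) \<le> log 2 9" by simp
    moreover have "log 2 (8::real) = 3"
    proof -
      have h: "log 2 ((2::real)^3) = real 3 * log 2 2" by (rule log_nat_power) simp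
      then show ?thesis by simp
    qed
    moreover have "log 2 (9::real) = 2 * log 2 3"
    proof -
      have h: "log 2 ((3::real)^2) = real 2 * log 2 3" by (rule log_nat_power) simp
      then show ?thesis by simp
    qed
    ultimately have "log 2 (3::real) \<ge> 3/2" by simp
    then show ?thesis using 3 by simp
  next
    case 4
    have "log 2 (real d) \<ge> log 2 4" using 4 by simp
    moreover have "log 2 (4::real) = 2"
    proof -
      have h: "log 2 ((2::real)^2) = real 2 * log 2 2" by (rule log_nat_power) simp
      then show ?thesis by simp
    qed
    ultimately have "log 2 (real d) \<ge> 2" by simp
    then have "2 * real d * log 2 (real d) \<ge> 2 * real d * 2" using assms by (intro mult_left_mono) auto
    then show ?thesis by simp
  qed simp_all
qed

lemma lam_bounds: "36/25 \<le> 1 / ln (2::real)" "1 / ln (2::real) \<le> 3/2"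
proof -
  have a: "2/3 \<le> ln (2::real)" "ln (2::real) \<le> 25/36" using ln2_ge_two_thirds ln2_le_25_over_36 by auto
  have p: "0 < ln (2::real)" by simp
  show "36/25 \<le> 1 / ln (2::real)" using a p by (simp add: field_simps)
  show "1 / ln (2::real) \<le> 3/2" using a p by (simp add: field_simps)
qed

lemma ka_bounds: "-(1/10) \<le> log 2 (31/32::real)" "log 2 (31/32::real) \<le> 0"
proof -
  show "log 2 (31/32::real) \<le> 0" by simp
  have "ln (31/32::real) \<ge> 1 - 1/(31/32)" by (rule ln_ge_1_minus_inv) simp
  then have l: "ln (31/32::real) \<ge> -1/31" by simp
  have "log 2 (31/32::real) = ln (31/32) * (1 / ln 2)" by (simp add: log_def)
  also have "\<dots> \<ge> (-1/31) * (1 / ln 2)" using l by (intro mult_right_mono) auto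
  finally have "log 2 (31/32::real) \<ge> (-1/31) * (1 / ln 2)" .
  moreover have "(-1/31) * (1 / ln (2::real)) \<ge> (-1/31) * (3/2)"
    using lam_bounds(2) by (intro mult_left_mono_neg) auto
  ultimately show "-(1/10) \<le> log 2 (31/32::real)" by simp
qed

lemma bound_n:
  fixes n t d :: nat
  assumes t: "1 \<le> t" and d: "1 \<le> d" and Lb: "128 \<le> log 2 (real n)"
    and big: "64 * real t * real d * log 2 (real n) \<le> real n"
  shows "log 2 (real (num_G t d n)) \<ge>
      (2 * real d * real t - 1) * real n * log 2 (real n)
      - (4 * real n * log 2 (real d) + 2 * real n * log 2 (real t)
         + 2 * real n * log 2 (log 2 (real n)) + real n) * real d * real t
      - 2 * real n - 2 * log 2 (real n)"
proof -
  define N where "N = real n"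
  define D where "D = real d"
  define T where "T = real t"
  define Lg where "Lg = log 2 (real n)"
  define lam where "lam = 1 / ln (2::real)"
  have n0: "n \<noteq> 0" using Lb by (cases "n = 0") (auto simp: log_def)
  have Npos: "N > 0" using n0 unfolding N_def by simp
  have D1: "D \<ge> 1" and T1: "T \<ge> 1" using t d unfolding D_def T_def by auto
  have Lg128: "Lg \<ge> 128" using Lb unfolding Lg_def .
  have Lgpos: "Lg > 0" using Lg128 by simp
  define Q where "Q = N / (D * Lg)"
  have DL: "D * Lg > 0" using D1 Lgpos by simp
  have Q64: "Q \<ge> 64 * T"
  proof -
    have "64 * T * (D * Lg) \<le> N" using big unfolding N_def T_def D_def Lg_def by (simp add: algebra_simps)
    then show ?thesis unfolding Q_def using DL by (simp add: field_simps)
  qed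
  have Q0: "Q \<ge> 0" using Q64 T1 by simp
  define m where "m = nat \<lfloor>Q\<rfloor>"
  define m2 where "m2 = nat \<lfloor>Q / 4\<rfloor>"
  have M1: "real m \<le> Q" "real m \<ge> Q - 1"
  proof -
    have e: "real m = of_int \<lfloor>Q\<rfloor>" unfolding m_def using Q0 by (simp add: of_nat_nat)
    show "real m \<le> Q" "real m \<ge> Q - 1" unfolding e using of_int_floor_le[of Q] real_of_int_floor_add_one_gt[of Q] by linarith+
  qed
  have M2: "real m2 \<le> Q / 4" "real m2 \<ge> Q / 4 - 1"
  proof -
    have e: "real m2 = of_int \<lfloor>Q / 4\<rfloor>" unfolding m2_def using Q0 by (simp add: of_nat_nat)
    show "real m2 \<le> Q / 4" "real m2 \<ge> Q / 4 - 1" unfolding e using of_int_floor_le[of "Q/4"] real_of_int_floor_add_one_gt[of "Q/4"] by linarith+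
  qed
  have m_ge: "2 * t \<le> m"
  proof -
    have "real (2 * t) \<le> real m" using M1 Q64 T1 unfolding T_def by simp
    then show ?thesis by (simp only: of_nat_le_iff)
  qed
  have m2_ge: "2 * t \<le> m2"
  proof -
    have "real (2 * t) \<le> real m2" using M2 Q64 T1 unfolding T_def by simp
    then show ?thesis by (simp only: of_nat_le_iff)
  qed
  have m1: "1 \<le> m" and m21: "1 \<le> m2" using m_ge m2_ge t by auto
  define y where "y = D * real m"
  define z where "z = D * real m2"
  have DQ: "D * Q = N / Lg" unfolding Q_def using D1 Lgpos by (simp add: field_simps)
  have y: "0 \<le> y" "y \<le> N / Lg" unfolding y_def using D1 M1(1) DQ by (auto intro: order.trans[OF mult_left_mono[OF M1(1)]])
  have z: "0 \<le> z" "z \<le> N / (4 * Lg)"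
  proof -
    show "0 \<le> z" unfolding z_def using D1 by simp
    have "z \<le> D * (Q / 4)" unfolding z_def using M2(1) D1 by (intro mult_left_mono) auto
    also have "\<dots> = N / (4 * Lg)" using DQ by (simp add: field_simps)
    finally show "z \<le> N / (4 * Lg)" .
  qed
  have mm: "d*m2 + d*m \<le> n"
  proof -
    have "y + z \<le> N / Lg + N / (4 * Lg)" using y z by simp
    also have "\<dots> \<le> N" using Lg128 Npos by (simp add: field_simps)
    finally have "real (d*m2 + d*m) \<le> real n" unfolding y_def z_def D_def N_def by simp
    then show ?thesis by (simp only: of_nat_le_iff)
  qed
  define X where "X = N - y - z"
  have mmr: "real d * real m2 + real d * real m \<le> real n"
  proof -
    have "real (d*m2 + d*m) \<le> real n" using mm by (simp only: of_nat_le_iff)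
    then show ?thesis by simp
  qed
  have X: "X \<ge> 0" "real (n - (d*m2 + d*m)) = X"
    using mm mmr unfolding X_def y_def z_def N_def D_def by (auto simp: of_nat_diff)
  define C1 where "C1 = m choose (2*t)"
  define C2 where "C2 = m2 choose (2*(t-1))"
  have C1pos: "C1 > 0" unfolding C1_def using m_ge by simp
  have C2pos: "C2 > 0" unfolding C2_def using m2_ge by simp
  define P where "P = card (Params t d m m2 n)"
  have P: "P = C2^(d*(d*m)) * C1^(d*(n - (d*m2 + d*m)))"
    unfolding P_def C1_def C2_def by (rule card_Params[OF mm])
  have Ppos: "P > 0" using P C1pos C2pos by simp
  have Ple: "P \<le> fact n * num_G t d n"
    using card_rep_ge[OF t d mm m1 m21] card_rep_le[of t d n] unfolding P_def by linarith
  have numpos: "num_G t d n > 0" using Ple Ppos by (cases "num_G t d n = 0") auto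
  have fpos: "(fact n :: real) > 0" by simp
  have lg1: "log 2 (real (num_G t d n)) \<ge> log 2 (real P) - log 2 (fact n)"
  proof -
    have "real P \<le> fact n * real (num_G t d n)" using Ple by (metis of_nat_fact of_nat_le_iff of_nat_mult)
    then have "real P / fact n \<le> real (num_G t d n)" using fpos by (simp add: field_simps)
    then have "log 2 (real P / fact n) \<le> log 2 (real (num_G t d n))"
      using Ppos fpos numpos by (subst log_le_cancel_iff) auto
    moreover have "log 2 (real P / fact n) = log 2 (real P) - log 2 (fact n)"
      using Ppos fpos by (simp add: log_divide)
    ultimately show ?thesis by simp
  qed
  define LC1 where "LC1 = log 2 (real C1)"
  define LC2 where "LC2 = log 2 (real C2)"
  have lgP: "log 2 (real P) = D * X * LC1 + D * y * LC2"
  proof -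
    have "log 2 (real P) = log 2 (real C2 ^ (d*(d*m)) * real C1 ^ (d*(n - (d*m2 + d*m))))"
      unfolding P by simp
    also have "\<dots> = real (d*(d*m)) * LC2 + real (d*(n - (d*m2 + d*m))) * LC1"
      using C1pos C2pos by (simp add: log_mult log_nat_power LC1_def LC2_def)
    also have "\<dots> = D * X * LC1 + D * y * LC2"
    proof -
      have e1: "real (d*(n - (d*m2 + d*m))) = D * X" unfolding D_def using X(2) by (simp only: of_nat_mult)
      have e2: "real (d*(d*m)) = D * y" unfolding D_def y_def by simp
      show ?thesis unfolding e1 e2 by (simp add: algebra_simps)
    qed
    finally show ?thesis .
  qed
  define lD where "lD = log 2 D"
  define lT where "lT = log 2 T"
  define lL where "lL = log 2 Lg"
  define ka where "ka = log 2 (31/32::real)"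
  have lQ: "log 2 Q = Lg - lD - lL"
  proof -
    have a: "log 2 N = Lg" unfolding N_def Lg_def ..
    have "log 2 (N / (D * Lg)) = log 2 N - (log 2 D + log 2 Lg)"
      using Npos D1 Lgpos by (simp add: log_divide log_mult)
    then show ?thesis unfolding Q_def lD_def lL_def a by simp
  qed
  have l2T: "log 2 (2 * T) = 1 + lT" unfolding lT_def using T1 by (simp add: log_mult)
  have LC1b: "LC1 \<ge> 2*T*(Lg - lD - lL + ka) - (2*T*(1 + lT) - 2*T*lam + (1 + lT) + lam)"
  proof -
    have b: "real ((m - 2*t + 1) ^ (2*t)) \<le> real (C1 * fact (2*t))"
      unfolding C1_def using binom_lower[of "2*t" m] m_ge by (simp only: of_nat_le_iff)
    have r: "real (m - 2*t + 1) = real m - 2*T + 1" using m_ge unfolding T_def by (simp add: of_nat_diff)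
    have rpos: "real m - 2*T + 1 > 0" using M1 Q64 T1 by simp
    have "log 2 (real ((m - 2*t + 1) ^ (2*t))) \<le> log 2 (real (C1 * fact (2*t)))"
      using b rpos r C1pos by (subst log_le_cancel_iff) (auto simp del: of_nat_power of_nat_mult)
    moreover have "log 2 (real ((m - 2*t + 1) ^ (2*t))) = 2*T * log 2 (real m - 2*T + 1)"
    proof -
      have "log 2 (real ((m - 2*t + 1) ^ (2*t))) = log 2 ((real m - 2*T + 1) ^ (2*t))"
        using r by (simp only: of_nat_power)
      also have "\<dots> = real (2*t) * log 2 (real m - 2*T + 1)" using rpos by (intro log_nat_power) simp
      finally show ?thesis unfolding T_def by simp
    qed
    moreover have "log 2 (real (C1 * fact (2*t))) = LC1 + log 2 (fact (2*t))"
      unfolding LC1_def using C1pos by (simp add: log_mult)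
    ultimately have s1: "2*T * log 2 (real m - 2*T + 1) \<le> LC1 + log 2 (fact (2*t))" by simp
    have q: "real m - 2*T + 1 \<ge> (31/32) * Q" using M1 Q64 by simp
    have "log 2 ((31/32) * Q) \<le> log 2 (real m - 2*T + 1)"
      using q Q64 T1 by (subst log_le_cancel_iff) auto
    moreover have "log 2 ((31/32) * Q) = ka + log 2 Q" unfolding ka_def
      by (rule log_mult_pos) (use Q64 T1 in auto)
    ultimately have s2: "ka + Lg - lD - lL \<le> log 2 (real m - 2*T + 1)" using lQ by simp
    have s3: "2*T*(ka + Lg - lD - lL) \<le> 2*T * log 2 (real m - 2*T + 1)"
      using s2 T1 by (intro mult_left_mono) auto
    have ft: "log 2 (fact (2*t) :: real) \<le> real (2*t) * log 2 (real (2*t)) - real (2*t) * (1 / ln 2) + log 2 (real (2*t)) + 1 / ln 2"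
      by (rule log2_fact_bound) (use t in simp)
    have ft': "log 2 (fact (2*t) :: real) \<le> 2*T*(1 + lT) - 2*T*lam + (1 + lT) + lam"
      using ft l2T unfolding T_def lam_def by simp
    show ?thesis using s1 s3 ft' by (simp add: algebra_simps)
  qed
  have LC2b: "LC2 \<ge> (2*T - 2)*(Lg - lD - lL - 3 - (1 + lT))"
  proof (cases "t = 1")
    case True
    then show ?thesis unfolding LC2_def C2_def T_def by simp
  next
    case False
    define k where "k = 2*(t-1)"
    have k1: "1 \<le> k" "k \<le> m2" using False t m2_ge unfolding k_def by auto
    have rk: "real k = 2*T - 2" unfolding k_def T_def using t by (simp add: of_nat_diff)
    have M2pos: "real m2 > 0" using m21 by simp
    have b: "(real m2 / real k) ^ k \<le> real C2" unfolding C2_def k_def[symmetric]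
      by (rule binomial_ge_n_over_k_pow_k) (use k1 in simp)
    have "log 2 ((real m2 / real k) ^ k) \<le> LC2"
      unfolding LC2_def using b M2pos k1 C2pos by (subst log_le_cancel_iff) auto
    moreover have "log 2 ((real m2 / real k) ^ k) = real k * (log 2 (real m2) - log 2 (real k))"
      using M2pos k1 by (simp add: log_nat_power log_divide)
    ultimately have s1: "real k * (log 2 (real m2) - log 2 (real k)) \<le> LC2" by simp
    have "log 2 (real k) \<le> log 2 (2*T)" using rk k1 T1 by (subst log_le_cancel_iff) auto
    then have lk: "log 2 (real k) \<le> 1 + lT" using l2T by simp
    have q: "real m2 \<ge> Q / 8" using M2 Q64 T1 by simp
    have "log 2 (Q / 8) \<le> log 2 (real m2)" using q Q64 T1 by (subst log_le_cancel_iff) auto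
    moreover have "log 2 (Q / 8) = log 2 Q - 3"
    proof -
      have h: "log 2 ((2::real)^3) = real 3 * log 2 2" by (rule log_nat_power) simp
      then have "log 2 (8::real) = 3" by simp
      then show ?thesis using Q64 T1 by (simp add: log_divide)
    qed
    ultimately have lm2: "Lg - lD - lL - 3 \<le> log 2 (real m2)" using lQ by simp
    have "Lg - lD - lL - 3 - (1 + lT) \<le> log 2 (real m2) - log 2 (real k)" using lk lm2 by simp
    then have "real k * (Lg - lD - lL - 3 - (1 + lT)) \<le> real k * (log 2 (real m2) - log 2 (real k))"
      by (intro mult_left_mono) auto
    then show ?thesis using s1 rk by simp
  qed
  have LF: "log 2 (fact n :: real) \<le> N*Lg - N*lam + Lg + lam"
    using log2_fact_bound[of n] n0 unfolding N_def Lg_def lam_def by simp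
  have fa: "D*X*LC1 + D*y*LC2 - log 2 (fact n) \<ge>
      (2*D*T - 1)*N*Lg - (4*N*lD + 2*N*lT + 2*N*lL + N)*D*T - 2*N - 2*Lg"
  proof (rule final_alg[OF Npos D1 T1 Lg128])
    show "lD \<ge> 0" unfolding lD_def using D1 by simp
    show "lT \<ge> 0" unfolding lT_def using T1 by simp
    show "lL \<ge> 0" unfolding lL_def using Lg128 by simp
    show "36/25 \<le> lam" "lam \<le> 3/2" unfolding lam_def using lam_bounds by auto
    show "-(1/10) \<le> ka" "ka \<le> 0" unfolding ka_def using ka_bounds by auto
    show "1 + lT \<le> T" unfolding lT_def T_def using lT2[OF t] .
    show "X = N - y - z" "X \<ge> 0" using X X_def by auto
    show "0 \<le> y" "y \<le> N / Lg" "0 \<le> z" "z \<le> N / (4*Lg)" using y z by auto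
    show "LC1 \<ge> 2*T*(Lg - lD - lL + ka) - (2*T*(1 + lT) - 2*T*lam + (1 + lT) + lam)" by (rule LC1b)
    show "LC2 \<ge> (2*T - 2)*(Lg - lD - lL - 3 - (1 + lT))" by (rule LC2b)
    show "log 2 (fact n) \<le> N*Lg - N*lam + Lg + lam" by (rule LF)
    show "2*D*lD \<ge> (7/2)*(D - 1)" unfolding D_def lD_def using Dcase[OF d] by simp
  qed
  show ?thesis using lg1 lgP fa unfolding N_def D_def T_def Lg_def lD_def lT_def lL_def by simp
qed

theorem theorem1:
  fixes t d :: "nat \<Rightarrow> nat"
  assumes "\<And>n. t n \<ge> 1" and "\<And>n. d n \<ge> 1"
    and "(\<lambda>n. real (t n * (d n)\<^sup>2)) \<in> o(\<lambda>n. real n / log 2 (real n))"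
  shows "\<exists>C::real. \<forall>\<^sub>F n in at_top.
    log 2 (real (num_G (t n) (d n) n)) \<ge>
      (2 * real (d n) * real (t n) - 1) * real n * log 2 (real n)
      - (4 * real n * log 2 (real (d n)) + 2 * real n * log 2 (real (t n))
         + 2 * real n * log 2 (log 2 (real n)) + real n) * real (d n) * real (t n)
      - 2 * real n - C * log 2 (real n)"
proof (rule exI[of _ 2])
  have ev1: "\<forall>\<^sub>F n in at_top. norm (real (t n * (d n)\<^sup>2)) \<le> (1/64) * norm (real n / log 2 (real n))"
    using landau_o.smallD[OF assms(3), of "1/64"] by simp
  have ev2: "\<forall>\<^sub>F n in at_top. 128 \<le> log 2 (real n)"
  proof -
    have "\<forall>\<^sub>F n in at_top. (2::nat)^128 \<le> n" by (rule eventually_ge_at_top)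
    then show ?thesis
    proof (rule eventually_mono)
      fix n :: nat assume h: "2^128 \<le> n"
      have "real ((2::nat)^128) \<le> real n" using h by (simp only: of_nat_le_iff)
      then have h': "(2::real)^128 \<le> real n" by simp
      have "log 2 ((2::real)^128) \<le> log 2 (real n)"
        using h' by (subst log_le_cancel_iff) auto
      moreover have "log 2 ((2::real)^128) = 128"
      proof -
        have "log 2 ((2::real)^128) = real 128 * log 2 2" by (rule log_nat_power) simp
        then show ?thesis by simp
      qed
      ultimately show "128 \<le> log 2 (real n)" by simp
    qed
  qed
  show "\<forall>\<^sub>F n in at_top.
    log 2 (real (num_G (t n) (d n) n)) \<ge>
      (2 * real (d n) * real (t n) - 1) * real n * log 2 (real n)
      - (4 * real n * log 2 (real (d n)) + 2 * real n * log 2 (real (t n))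
         + 2 * real n * log 2 (log 2 (real n)) + real n) * real (d n) * real (t n)
      - 2 * real n - 2 * log 2 (real n)"
    using eventually_conj[OF ev1 ev2]
  proof (rule eventually_mono)
    fix n assume h: "norm (real (t n * (d n)\<^sup>2)) \<le> (1/64) * norm (real n / log 2 (real n)) \<and> 128 \<le> log 2 (real n)"
    define L where "L = log 2 (real n)"
    have L: "128 \<le> L" using h unfolding L_def by simp
    have n0: "real n \<ge> 0" by simp
    have h1: "real (t n) * (real (d n))^2 \<le> (1/64) * (real n / L)"
      using h L n0 unfolding L_def by simp
    have "64 * real (t n) * (real (d n))^2 * L \<le> real n"
    proof -
      have "64 * (real (t n) * (real (d n))^2) \<le> real n / L" using h1 by simp
      then have "64 * (real (t n) * (real (d n))^2) * L \<le> real n / L * L" using L by (intro mult_right_mono) auto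
      also have "\<dots> = real n" using L by simp
      finally show ?thesis by (simp add: algebra_simps)
    qed
    moreover have "64 * real (t n) * real (d n) * L \<le> 64 * real (t n) * (real (d n))^2 * L"
    proof -
      have "real (d n) \<le> (real (d n))^2" using assms(2)[of n] by (simp add: power2_eq_square)
      then show ?thesis using L by (intro mult_right_mono mult_left_mono) auto
    qed
    ultimately have big: "64 * real (t n) * real (d n) * log 2 (real n) \<le> real n" unfolding L_def by linarith
    show "log 2 (real (num_G (t n) (d n) n)) \<ge>
      (2 * real (d n) * real (t n) - 1) * real n * log 2 (real n)
      - (4 * real n * log 2 (real (d n)) + 2 * real n * log 2 (real (t n))
         + 2 * real n * log 2 (log 2 (real n)) + real n) * real (d n) * real (t n)
      - 2 * real n - 2 * log 2 (real n)"
      by (rule bound_n[OF assms(1) assms(2) L[unfolded L_def] big])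
  qed
qed

end
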